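(* Let $\mathcal H$ be the $5$-uniform hypergraph defined below, let $e,f$ be two edges of $\mathcal H$, and let $\phi : V(\mathcal{H}_{ef}) \to V(\mathcal{H})$ be a monomorphism. If one of $e,f$ lies in $\{b, e_5\}$ and the other lies in $\{r, g, a\}$, then $\phi$ is the identity.
   Context: $\mathcal{H}$ has vertex set $\{z, v_1,\dots,v_9\}$ and edges $r=\{z,v_1,v_3,v_5,v_8\}$, $g=\{z,v_2,v_4,v_7,v_9\}$, $a=\{v_1,v_4,v_6,v_8,v_9\}$, $b=\{v_9,v_1,v_2,v_3,v_4\}$, and $e_i=\{v_i,v_{i+1},v_{i+2},v_{i+3},v_{i+4}\}$ for $i=1,\dots,5$. $\mathcal{H}_{ef}$ is the hypergraph with edge set $E(\mathcal H)\setminus\{e,f\}$, and $V(\mathcal H_{ef})$ is the union of its edges. A monomorphism $\phi: V(\mathcal{H}_{ef})\to V(\mathcal{H})$ is an injective map such that $\{\phi(y): y\in x\}$ is an edge of $\mathcal H$ for every edge $x$ of $\mathcal H_{ef}$; "identity" means $\phi(y)=y$ for all $y\in V(\mathcal H_{ef})$. *)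

theory Defs
  imports Main
begin

definition hz :: nat where "hz = 0"
definition hv :: "nat \<Rightarrow> nat" where "hv i = i"

definition H_vertices :: "nat set" where
  "H_vertices = insert hz (hv ` {1..9})"

definition edge_r :: "nat set" where "edge_r = {hz, hv 1, hv 3, hv 5, hv 8}"
definition edge_g :: "nat set" where "edge_g = {hz, hv 2, hv 4, hv 7, hv 9}"
definition edge_a :: "nat set" where "edge_a = {hv 1, hv 4, hv 6, hv 8, hv 9}"
definition edge_b :: "nat set" where "edge_b = {hv 9, hv 1, hv 2, hv 3, hv 4}"
definition edge_e :: "nat \<Rightarrow> nat set" where
  "edge_e i = {hv i, hv (i+1), hv (i+2), hv (i+3), hv (i+4)}"

definition H_edges :: "nat set set" where
  "H_edges = {edge_r, edge_g, edge_a, edge_b} \<union> edge_e ` {1..5}"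

definition Hef_edges :: "nat set \<Rightarrow> nat set \<Rightarrow> nat set set" where
  "Hef_edges e f = H_edges - {e, f}"

definition Hef_vertices :: "nat set \<Rightarrow> nat set \<Rightarrow> nat set" where
  "Hef_vertices e f = \<Union> (Hef_edges e f)"

definition monomorphism_Hef :: "nat set \<Rightarrow> nat set \<Rightarrow> (nat \<Rightarrow> nat) \<Rightarrow> bool" where
  "monomorphism_Hef e f \<phi> \<longleftrightarrow>
     inj_on \<phi> (Hef_vertices e f) \<and> \<phi> ` Hef_vertices e f \<subseteq> H_vertices \<and>
     (\<forall>x \<in> Hef_edges e f. \<phi> ` x \<in> H_edges)"

end

theory Submission
  imports Defs
begin

definition EL :: "nat list list" where
 "EL = [[0,1,3,5,8],[0,2,4,7,9],[1,4,6,8,9],[1,2,3,4,9],[1,2,3,4,5],[2,3,4,5,6],[3,4,5,6,7],[4,5,6,7,8],[5,6,7,8,9]]"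

definition ok :: "nat list list \<Rightarrow> nat list \<Rightarrow> nat \<Rightarrow> bool" where
 "ok P ms t = (t \<notin> set ms \<and>
    (\<forall>xp\<in>set P. length ms \<in> set xp \<longrightarrow> (\<exists>l\<in>set EL. \<forall>i\<in>set xp. i \<le> length ms \<longrightarrow> (ms@[t]) ! i \<in> set l)))"

fun sols :: "nat list list \<Rightarrow> nat list list \<Rightarrow> nat list \<Rightarrow> nat list list"
and tryc :: "nat list list \<Rightarrow> nat list list \<Rightarrow> nat list \<Rightarrow> nat list \<Rightarrow> nat list list" where
 "sols [] P ms = [ms]"
| "sols (c#cs) P ms = tryc cs P ms c"
| "tryc cs P ms [] = []"
| "tryc cs P ms (t#ts) = (if ok P ms t then sols cs P (ms@[t]) else []) @ tryc cs P ms ts"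

definition deg :: "nat list list \<Rightarrow> nat \<Rightarrow> nat" where
 "deg L v = length (filter (\<lambda>x. v \<in> set x) L)"

definition cands :: "nat list list \<Rightarrow> nat list list" where
 "cands P = map (\<lambda>k. filter (\<lambda>t. deg P k \<le> deg EL t) [0..<10]) [0..<10]"

lemma tryc_mem:
  "t \<in> set ts \<Longrightarrow> ok P ms t \<Longrightarrow> X \<in> set (sols cs P (ms@[t])) \<Longrightarrow> X \<in> set (tryc cs P ms ts)"
  by (induction ts) auto

lemma sols_complete:
  "length ms + length cs = length fs \<Longrightarrow> ms = take (length ms) fs \<Longrightarrow>
   (\<forall>k. length ms \<le> k \<and> k < length fs \<longrightarrow> fs!k \<in> set (cs ! (k - length ms)) \<and> ok P (take k fs) (fs!k))
   \<Longrightarrow> fs \<in> set (sols cs P ms)"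
proof (induction cs arbitrary: ms)
  case Nil
  then show ?case by simp
next
  case (Cons c cs)
  define t where "t = fs ! length ms"
  have lt: "length ms < length fs" using Cons.prems(1) by simp
  have tc: "t \<in> set c" and okt: "ok P ms t"
    using Cons.prems(3)[rule_format, of "length ms"] lt Cons.prems(2) unfolding t_def by auto
  have take1: "ms @ [t] = take (length (ms@[t])) fs"
    using Cons.prems(2) lt unfolding t_def by (simp add: take_Suc_conv_app_nth)
  have "fs \<in> set (sols cs P (ms@[t]))"
  proof (rule Cons.IH)
    show "length (ms @ [t]) + length cs = length fs" using Cons.prems(1) by simp
    show "ms @ [t] = take (length (ms @ [t])) fs" by (rule take1)
    show "\<forall>k. length (ms @ [t]) \<le> k \<and> k < length fs \<longrightarrow>
        fs ! k \<in> set (cs ! (k - length (ms @ [t]))) \<and> ok P (take k fs) (fs ! k)"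
    proof (intro allI impI)
      fix k assume k: "length (ms @ [t]) \<le> k \<and> k < length fs"
      then have "length ms \<le> k \<and> k < length fs" by simp
      from Cons.prems(3)[rule_format, OF this]
      have "fs ! k \<in> set ((c # cs) ! (k - length ms)) \<and> ok P (take k fs) (fs ! k)" .
      moreover have "(c # cs) ! (k - length ms) = cs ! (k - length (ms @ [t]))"
        using k by (simp add: Suc_diff_Suc)
      ultimately show "fs ! k \<in> set (cs ! (k - length (ms @ [t]))) \<and> ok P (take k fs) (fs ! k)"
        by simp
    qed
  qed
  then show ?case using tryc_mem[OF tc okt] by simp
qed


lemma EL_props: "\<forall>l\<in>set EL. sorted l \<and> distinct l \<and> set l \<subseteq> {..<10}"
  by (simp add: EL_def)

lemma set_inj_EL: "l \<in> set EL \<Longrightarrow> l' \<in> set EL \<Longrightarrow> set l = set l' \<Longrightarrow> l = l'"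
  using EL_props sorted_distinct_set_unique by blast

lemma H_vertices_eq: "H_vertices = {..<10}"
  unfolding H_vertices_def hz_def hv_def by (auto simp: image_iff)

lemma edges_eq:
  "edge_r = set [0,1,3,5,8]" "edge_g = set [0,2,4,7,9]" "edge_a = set [1,4,6,8,9]"
  "edge_b = set [1,2,3,4,9]" "edge_e 1 = set [1,2,3,4,5]" "edge_e 2 = set [2,3,4,5,6]"
  "edge_e 3 = set [3,4,5,6,7]" "edge_e 4 = set [4,5,6,7,8]" "edge_e 5 = set [5,6,7,8,9]"
  by (auto simp: edge_r_def edge_g_def edge_a_def edge_b_def edge_e_def hz_def hv_def)

lemma H_edges_eq: "H_edges = set (map set EL)"
proof -
  have "{1..5::nat} = {1,2,3,4,5}" by auto
  then have "edge_e ` {1..5} = {edge_e 1, edge_e 2, edge_e 3, edge_e 4, edge_e 5}" by simp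
  then show ?thesis unfolding H_edges_def EL_def edges_eq by (simp add: insert_commute)
qed


lemma deg_card: "distinct L \<Longrightarrow> deg L v = card {x\<in>set L. v \<in> set x}"
  unfolding deg_def by (simp add: distinct_card[symmetric] set_filter)

lemma deg_le:
  fixes vs :: "nat list" and \<phi> :: "nat \<Rightarrow> nat" and P :: "nat list list"
  assumes Pd: "distinct P"
    and Ps: "\<forall>xp\<in>set P. sorted xp \<and> distinct xp \<and> (\<forall>i\<in>set xp. i < 10)"
    and vs: "distinct vs" "set vs = {..<10}"
    and inj: "inj_on \<phi> {..<10}"
    and img: "\<forall>xp\<in>set P. \<phi> ` ((!) vs ` set xp) \<in> set (map set EL)"
    and k: "k < 10"
  shows "deg P k \<le> deg EL (\<phi> (vs ! k))"
proof -
  have lv: "length vs = 10" using vs distinct_card[of vs] by simp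
  let ?A = "{xp\<in>set P. k \<in> set xp}"
  let ?B = "{Y\<in>set (map set EL). \<phi> (vs!k) \<in> Y}"
  define f where "f xp = \<phi> ` ((!) vs ` set xp)" for xp
  have sub: "(!) vs ` set xp \<subseteq> {..<10}" if "xp \<in> set P" for xp
    using that Ps vs lv by (metis image_subsetI lessThan_iff nth_mem)
  have injA: "inj_on f ?A"
  proof (rule inj_onI)
    fix a b assume a: "a \<in> ?A" and b: "b \<in> ?A" and e: "f a = f b"
    have "(!) vs ` set a = (!) vs ` set b"
      using e sub a b inj unfolding f_def by (simp add: inj_on_image_eq_iff)
    moreover have "inj_on ((!) vs) {..<10}" using vs lv by (simp add: inj_on_nth)
    moreover have "set a \<subseteq> {..<10}" "set b \<subseteq> {..<10}" using a b Ps by auto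
    ultimately have "set a = set b" by (simp add: inj_on_image_eq_iff)
    then show "a = b" using a b Ps sorted_distinct_set_unique by blast
  qed
  have fAB: "f ` ?A \<subseteq> ?B"
  proof
    fix Y assume "Y \<in> f ` ?A"
    then obtain xp where xp: "xp \<in> ?A" "Y = f xp" by blast
    have "\<phi> (vs ! k) \<in> Y" using xp unfolding f_def by auto
    then show "Y \<in> ?B" using img xp unfolding f_def by auto
  qed
  have "deg P k = card ?A" using deg_card[OF Pd] by simp
  also have "\<dots> \<le> card ?B" using card_inj_on_le[OF injA fAB] by simp
  also have "?B = set ` {l\<in>set EL. \<phi> (vs!k) \<in> set l}" by auto
  also have "card \<dots> \<le> card {l\<in>set EL. \<phi> (vs!k) \<in> set l}" by (rule card_image_le) simp
  also have "\<dots> = card (set (filter (\<lambda>l. \<phi> (vs!k) \<in> set l) EL))" by (simp add: set_filter)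
  also have "\<dots> \<le> deg EL (\<phi> (vs ! k))" unfolding deg_def by (rule card_length)
  finally show ?thesis .
qed


lemma main_generic:
  fixes vs :: "nat list" and \<phi> :: "nat \<Rightarrow> nat" and P :: "nat list list" and eL fL :: "nat list"
  assumes eL: "eL \<in> set EL" and fL: "fL \<in> set EL"
    and mono: "monomorphism_Hef (set eL) (set fL) \<phi>"
    and vsort: "sort vs = [0..<10]"
    and Pd: "distinct P"
    and Pok: "\<forall>xp\<in>set P. sorted xp \<and> distinct xp \<and> (\<forall>i\<in>set xp. i < 10) \<and>
               (\<exists>l\<in>set EL. l \<noteq> eL \<and> l \<noteq> fL \<and> sort (map ((!) vs) xp) = l)"
    and cover0: "\<forall>k\<in>set [0..<10]. \<exists>xp\<in>set P. k \<in> set xp"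
    and search: "sols (cands P) P [] = [vs]"
  shows "\<forall>y \<in> Hef_vertices (set eL) (set fL). \<phi> y = y"
proof -
  have vs: "distinct vs" "set vs = {..<10}"
    using vsort by (metis distinct_sort distinct_upt, metis set_sort set_upt atLeast0LessThan)
  have cover: "\<forall>k<10. \<exists>xp\<in>set P. k \<in> set xp" using cover0 by simp
  have lv: "length vs = 10" using vs distinct_card[of vs] by simp
  have HE: "Hef_edges (set eL) (set fL) = set (map set EL) - {set eL, set fL}"
    unfolding Hef_edges_def H_edges_eq ..
  have Xin: "(!) vs ` set xp \<in> Hef_edges (set eL) (set fL)" if xp: "xp \<in> set P" for xp
  proof -
    obtain l where l: "l \<in> set EL" "l \<noteq> eL" "l \<noteq> fL" "sort (map ((!) vs) xp) = l"
      using Pok xp by blast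
    have sl: "set l = (!) vs ` set xp" using l(4) by (metis set_map set_sort)
    have n1: "set l \<noteq> set eL" using set_inj_EL[OF l(1) eL] l(2) by blast
    have n2: "set l \<noteq> set fL" using set_inj_EL[OF l(1) fL] l(3) by blast
    have m: "set l \<in> set (map set EL)" using l(1) by simp
    from m n1 n2 have "set l \<in> set (map set EL) - {set eL, set fL}" by blast
    then show ?thesis unfolding HE sl .
  qed
  have V1: "Hef_vertices (set eL) (set fL) \<subseteq> {..<10}"
    unfolding Hef_vertices_def HE using EL_props by auto
  have V2: "{..<10} \<subseteq> Hef_vertices (set eL) (set fL)"
  proof
    fix v :: nat assume "v \<in> {..<10}"
    then obtain k where k: "k < 10" "v = vs ! k" using vs lv by (metis in_set_conv_nth)
    obtain xp where "xp \<in> set P" "k \<in> set xp" using cover k by blast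
    then show "v \<in> Hef_vertices (set eL) (set fL)"
      unfolding Hef_vertices_def using Xin k by blast
  qed
  have V: "Hef_vertices (set eL) (set fL) = {..<10}" using V1 V2 by blast
  have inj: "inj_on \<phi> {..<10}" and rng: "\<phi> ` {..<10} \<subseteq> {..<10}"
    and edg: "\<forall>x\<in>Hef_edges (set eL) (set fL). \<phi> ` x \<in> set (map set EL)"
    using mono unfolding monomorphism_Hef_def V H_vertices_eq H_edges_eq by auto
  have img: "\<forall>xp\<in>set P. \<phi> ` ((!) vs ` set xp) \<in> set (map set EL)"
    using edg Xin by blast
  define fs where "fs = map \<phi> vs"
  have lfs: "length fs = 10" using lv fs_def by simp
  have dfs: "distinct fs" unfolding fs_def using vs inj by (simp add: distinct_map)
  have fsk: "fs ! k = \<phi> (vs ! k)" if "k < 10" for k using that lv fs_def by simp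
  have vsk: "vs ! k < 10" if "k < 10" for k using that lv vs by (metis lessThan_iff nth_mem)
  have Pss: "\<forall>xp\<in>set P. sorted xp \<and> distinct xp \<and> (\<forall>i\<in>set xp. i < 10)" using Pok by blast
  have "fs \<in> set (sols (cands P) P [])"
  proof (rule sols_complete)
    show "length [] + length (cands P) = length fs" using lfs by (simp add: cands_def)
    show "[] = take (length []) fs" by simp
    show "\<forall>k. length [] \<le> k \<and> k < length fs \<longrightarrow>
          fs ! k \<in> set (cands P ! (k - length [])) \<and> ok P (take k fs) (fs ! k)"
    proof (intro allI impI)
      fix k assume "length [] \<le> k \<and> k < length fs"
      then have k: "k < 10" using lfs by simp
      have t10: "fs ! k < 10" using fsk[OF k] vsk[OF k] rng by auto
      have dg: "deg P k \<le> deg EL (fs ! k)"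
        using deg_le[OF Pd Pss vs inj img k] fsk[OF k] by simp
      have c1: "fs ! k \<in> set (cands P ! (k - length []))"
        using k t10 dg by (simp add: cands_def)
      have tk: "take k fs @ [fs ! k] = take (Suc k) fs" using k lfs by (simp add: take_Suc_conv_app_nth)
      have "distinct (take k fs @ [fs ! k])" unfolding tk using dfs by simp
      then have n1: "fs ! k \<notin> set (take k fs)" by simp
      have e1: "\<exists>l\<in>set EL. \<forall>i\<in>set xp. i \<le> k \<longrightarrow> (take k fs @ [fs ! k]) ! i \<in> set l"
        if xp: "xp \<in> set P" for xp
      proof -
        obtain l where l: "l \<in> set EL" "set l = \<phi> ` ((!) vs ` set xp)" using img xp by auto
        have "\<forall>i\<in>set xp. i \<le> k \<longrightarrow> (take k fs @ [fs ! k]) ! i \<in> set l"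
        proof (intro ballI impI)
          fix i assume i: "i \<in> set xp" "i \<le> k"
          have "(take k fs @ [fs ! k]) ! i = fs ! i" unfolding tk using i k by simp
          also have "\<dots> = \<phi> (vs ! i)" using fsk i k by simp
          finally show "(take k fs @ [fs ! k]) ! i \<in> set l" using l(2) i by auto
        qed
        then show ?thesis using l(1) by blast
      qed
      have "ok P (take k fs) (fs ! k)"
        unfolding ok_def using n1 e1 k lfs by auto
      then show "fs ! k \<in> set (cands P ! (k - length [])) \<and> ok P (take k fs) (fs ! k)"
        using c1 by simp
    qed
  qed
  then have "fs = vs" using search by simp
  show ?thesis
  proof
    fix y assume "y \<in> Hef_vertices (set eL) (set fL)"
    then have "y \<in> set vs" using V vs by simp
    then obtain k where k: "k < 10" "y = vs ! k" using lv by (metis in_set_conv_nth)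
    then show "\<phi> y = y" using fsk[OF k(1)] \<open>fs = vs\<close> by simp
  qed
qed


lemma inst_b_r:
  assumes "monomorphism_Hef (set [1,2,3,4,9]) (set [0,1,3,5,8]) \<phi>"
  shows "\<forall>y \<in> Hef_vertices (set [1,2,3,4,9]) (set [0,1,3,5,8]). \<phi> y = y"
proof (rule main_generic[OF _ _ assms, where vs="[6,4,5,7,8,9,1,0,3,2]" and P="[[1,3,5,7,9],[0,1,4,5,6],[1,2,6,8,9],[0,1,2,8,9],[0,1,2,3,8],[0,1,2,3,4],[0,2,3,4,5]]"])
  show "sols (cands [[1,3,5,7,9],[0,1,4,5,6],[1,2,6,8,9],[0,1,2,8,9],[0,1,2,3,8],[0,1,2,3,4],[0,2,3,4,5]]) [[1,3,5,7,9],[0,1,4,5,6],[1,2,6,8,9],[0,1,2,8,9],[0,1,2,3,8],[0,1,2,3,4],[0,2,3,4,5]] [] = [[6,4,5,7,8,9,1,0,3,2]]" by code_simp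
qed code_simp+

lemma inst_b_g:
  assumes "monomorphism_Hef (set [1,2,3,4,9]) (set [0,2,4,7,9]) \<phi>"
  shows "\<forall>y \<in> Hef_vertices (set [1,2,3,4,9]) (set [0,2,4,7,9]). \<phi> y = y"
proof (rule main_generic[OF _ _ assms, where vs="[6,4,5,7,8,9,1,0,3,2]" and P="[[2,4,6,7,8],[0,1,4,5,6],[1,2,6,8,9],[0,1,2,8,9],[0,1,2,3,8],[0,1,2,3,4],[0,2,3,4,5]]"])
  show "sols (cands [[2,4,6,7,8],[0,1,4,5,6],[1,2,6,8,9],[0,1,2,8,9],[0,1,2,3,8],[0,1,2,3,4],[0,2,3,4,5]]) [[2,4,6,7,8],[0,1,4,5,6],[1,2,6,8,9],[0,1,2,8,9],[0,1,2,3,8],[0,1,2,3,4],[0,2,3,4,5]] [] = [[6,4,5,7,8,9,1,0,3,2]]" by code_simp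
qed code_simp+

lemma inst_b_a:
  assumes "monomorphism_Hef (set [1,2,3,4,9]) (set [1,4,6,8,9]) \<phi>"
  shows "\<forall>y \<in> Hef_vertices (set [1,2,3,4,9]) (set [1,4,6,8,9]). \<phi> y = y"
proof (rule main_generic[OF _ _ assms, where vs="[5,4,3,6,7,2,8,0,1,9]" and P="[[0,2,6,7,8],[1,4,5,7,9],[0,1,2,5,8],[0,1,2,3,5],[0,1,2,3,4],[0,1,3,4,6],[0,3,4,6,9]]"])
  show "sols (cands [[0,2,6,7,8],[1,4,5,7,9],[0,1,2,5,8],[0,1,2,3,5],[0,1,2,3,4],[0,1,3,4,6],[0,3,4,6,9]]) [[0,2,6,7,8],[1,4,5,7,9],[0,1,2,5,8],[0,1,2,3,5],[0,1,2,3,4],[0,1,3,4,6],[0,3,4,6,9]] [] = [[5,4,3,6,7,2,8,0,1,9]]" by code_simp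
qed code_simp+

lemma inst_e5_r:
  assumes "monomorphism_Hef (set [5,6,7,8,9]) (set [0,1,3,5,8]) \<phi>"
  shows "\<forall>y \<in> Hef_vertices (set [5,6,7,8,9]) (set [0,1,3,5,8]). \<phi> y = y"
proof (rule main_generic[OF _ _ assms, where vs="[3,1,4,2,9,6,0,7,5,8]" and P="[[2,3,4,6,7],[1,2,4,5,9],[0,1,2,3,4],[0,1,2,3,8],[0,2,3,5,8],[0,2,5,7,8],[2,5,7,8,9]]"])
  show "sols (cands [[2,3,4,6,7],[1,2,4,5,9],[0,1,2,3,4],[0,1,2,3,8],[0,2,3,5,8],[0,2,5,7,8],[2,5,7,8,9]]) [[2,3,4,6,7],[1,2,4,5,9],[0,1,2,3,4],[0,1,2,3,8],[0,2,3,5,8],[0,2,5,7,8],[2,5,7,8,9]] [] = [[3,1,4,2,9,6,0,7,5,8]]" by code_simp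
qed code_simp+

lemma inst_e5_g:
  assumes "monomorphism_Hef (set [5,6,7,8,9]) (set [0,2,4,7,9]) \<phi>"
  shows "\<forall>y \<in> Hef_vertices (set [5,6,7,8,9]) (set [0,2,4,7,9]). \<phi> y = y"
proof (rule main_generic[OF _ _ assms, where vs="[3,4,5,7,6,8,2,1,9,0]" and P="[[0,2,5,7,9],[1,4,5,7,8],[0,1,6,7,8],[0,1,2,6,7],[0,1,2,4,6],[0,1,2,3,4],[1,2,3,4,5]]"])
  show "sols (cands [[0,2,5,7,9],[1,4,5,7,8],[0,1,6,7,8],[0,1,2,6,7],[0,1,2,4,6],[0,1,2,3,4],[1,2,3,4,5]]) [[0,2,5,7,9],[1,4,5,7,8],[0,1,6,7,8],[0,1,2,6,7],[0,1,2,4,6],[0,1,2,3,4],[1,2,3,4,5]] [] = [[3,4,5,7,6,8,2,1,9,0]]" by code_simp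
qed code_simp+

lemma inst_e5_a:
  assumes "monomorphism_Hef (set [5,6,7,8,9]) (set [1,4,6,8,9]) \<phi>"
  shows "\<forall>y \<in> Hef_vertices (set [5,6,7,8,9]) (set [1,4,6,8,9]). \<phi> y = y"
proof (rule main_generic[OF _ _ assms, where vs="[3,4,5,7,6,8,2,1,9,0]" and P="[[0,2,5,7,9],[1,3,6,8,9],[0,1,6,7,8],[0,1,2,6,7],[0,1,2,4,6],[0,1,2,3,4],[1,2,3,4,5]]"])
  show "sols (cands [[0,2,5,7,9],[1,3,6,8,9],[0,1,6,7,8],[0,1,2,6,7],[0,1,2,4,6],[0,1,2,3,4],[1,2,3,4,5]]) [[0,2,5,7,9],[1,3,6,8,9],[0,1,6,7,8],[0,1,2,6,7],[0,1,2,4,6],[0,1,2,3,4],[1,2,3,4,5]] [] = [[3,4,5,7,6,8,2,1,9,0]]" by code_simp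
qed code_simp+


lemma key:
  assumes "e \<in> {edge_b, edge_e 5}" "f \<in> {edge_r, edge_g, edge_a}" "monomorphism_Hef e f \<phi>"
  shows "\<forall>y \<in> Hef_vertices e f. \<phi> y = y"
  using assms unfolding edges_eq
  using inst_b_r inst_b_g inst_b_a inst_e5_r inst_e5_g inst_e5_a by blast

lemma Hef_sym: "Hef_edges e f = Hef_edges f e"
  unfolding Hef_edges_def by (simp add: insert_commute)

theorem lemma4p11:
  assumes "e \<in> H_edges" and "f \<in> H_edges"
    and "(e \<in> {edge_b, edge_e 5} \<and> f \<in> {edge_r, edge_g, edge_a}) \<or>
         (f \<in> {edge_b, edge_e 5} \<and> e \<in> {edge_r, edge_g, edge_a})"
    and "monomorphism_Hef e f \<phi>"
  shows "\<forall>y \<in> Hef_vertices e f. \<phi> y = y"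
proof -
  have mono': "monomorphism_Hef f e \<phi>" and V': "Hef_vertices e f = Hef_vertices f e"
    using assms(4) unfolding monomorphism_Hef_def Hef_vertices_def Hef_sym[of e f] by simp_all
  show ?thesis
    using assms(3) key[OF _ _ assms(4)] key[OF _ _ mono'] V' by auto
qed

end
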